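(* Let $a_1,\dots,a_\ell,c_1,\dots,c_s,m,b_1,\dots,b_t$ be integers $\ge 2$ with $a_\ell>2$ when $\ell\ge1$, where $\ell,s,t\ge 0$. For each integer $k\ge 0$ let $p=p(k)>q=q(k)>0$ be the coprime integers with $$\frac{p}{q}=\left[a_1,\dots,a_\ell,[2]^k,c_1,\dots,c_s,m+k,b_1,\dots,b_t\right],$$ and let $q^{-1}=q^{-1}(k)$ be the inverse of $q$ modulo $p$ with $0<q^{-1}<p$. Then there are constants $d_i,e_i,f_i$ ($i=1,2,3$), independent of $k$, with $d_1\neq 0$, such that for all $k\ge 0$: $p=d_1k^2+e_1k+f_1$, $q=d_2k^2+e_2k+f_2$, $q^{-1}=d_3k^2+e_3k+f_3$, and $$\frac{d_1}{d_2}=\begin{cases}[a_1,\dots,a_{\ell-1},a_\ell-1] & \ell\ge1,\\ 1 & \ell=0,\end{cases}\qquad \frac{d_1}{d_3}=\begin{cases}[b_t,\dots,b_1] & t\ge1,\\ \infty\ (\text{i.e. } d_3=0) & t=0.\end{cases}$$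
   Context: $[x_1,\dots,x_n]=x_1-1/(x_2-1/(\cdots-1/x_n))$ denotes the Hirzebruch–Jung continued fraction; $[2]^k$ denotes $k$ consecutive entries equal to $2$. *)

theory Defs
  imports "HOL-Number_Theory.Number_Theory"
begin

text \<open>Hirzebruch-Jung continued fraction [x1,...,xn] = x1 - 1/(x2 - 1/(... - 1/xn)).
  The value on the empty list is an irrelevant convention (never used).\<close>
fun hjcf :: "rat list \<Rightarrow> rat" where
  "hjcf [] = 0"
| "hjcf [x] = x"
| "hjcf (x # y # ys) = x - 1 / hjcf (y # ys)"

end

theory Submission imports Defs begin

fun F :: "int list \<Rightarrow> int \<times> int \<times> int \<times> int" where
  "F [] = (1,0,0,-1)"
| "F (x#xs) = (case F xs of (P,Q,R,S) \<Rightarrow> (x*P-Q, P, x*R-S, R))"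

definition mcomp :: "int\<times>int\<times>int\<times>int \<Rightarrow> int\<times>int\<times>int\<times>int \<Rightarrow> int\<times>int\<times>int\<times>int" where
 "mcomp u v = (case u of (P1,Q1,R1,S1) \<Rightarrow> case v of (P2,Q2,R2,S2) \<Rightarrow>
    (P1*P2 - R1*Q2, Q1*P2 - S1*Q2, P1*R2 - R1*S2, Q1*R2 - S1*S2))"

lemma comp_simp[simp]: "mcomp (P1,Q1,R1,S1) (P2,Q2,R2,S2) =
    (P1*P2 - R1*Q2, Q1*P2 - S1*Q2, P1*R2 - R1*S2, Q1*R2 - S1*S2)"
  by (simp add: mcomp_def)

definition add4 :: "int\<times>int\<times>int\<times>int \<Rightarrow> int\<times>int\<times>int\<times>int \<Rightarrow> int\<times>int\<times>int\<times>int" where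
 "add4 u v = (case u of (P1,Q1,R1,S1) \<Rightarrow> case v of (P2,Q2,R2,S2) \<Rightarrow> (P1+P2,Q1+Q2,R1+R2,S1+S2))"
lemma add4_simp[simp]: "add4 (P1,Q1,R1,S1) (P2,Q2,R2,S2) = (P1+P2,Q1+Q2,R1+R2,S1+S2)"
  by (simp add: add4_def)
definition smul :: "int \<Rightarrow> int\<times>int\<times>int\<times>int \<Rightarrow> int\<times>int\<times>int\<times>int" where
 "smul k u = (case u of (P1,Q1,R1,S1) \<Rightarrow> (k*P1,k*Q1,k*R1,k*S1))"
lemma smul_simp[simp]: "smul k (P1,Q1,R1,S1) = (k*P1,k*Q1,k*R1,k*S1)"
  by (simp add: smul_def)

lemma F_Cons: "F xs = (P,Q,R,S) \<Longrightarrow> F (x#xs) = (x*P-Q, P, x*R-S, R)"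
  by simp

lemma F_append: "F (xs @ ys) = mcomp (F xs) (F ys)"
proof (induction xs)
  case Nil
  show ?case by (cases "F ys" rule: prod_cases4) simp
next
  case (Cons x xs)
  obtain P Q R S where A: "F xs = (P,Q,R,S)" by (cases "F xs" rule: prod_cases4)
  obtain P2 Q2 R2 S2 where B: "F ys = (P2,Q2,R2,S2)" by (cases "F ys" rule: prod_cases4)
  show ?case using Cons A B by (simp add: algebra_simps)
qed

lemma F_rep: "F (replicate k 2) = (int k+1, int k, int k, int k - 1)"
  by (induction k) (auto simp: algebra_simps)

lemma F_rev: "F xs = (P,Q,R,S) \<Longrightarrow> F (rev xs) = (P,R,Q,S)"
proof (induction xs arbitrary: P Q R S)
  case Nil then show ?case by simp
next
  case (Cons x xs)
  obtain P1 Q1 R1 S1 where A: "F xs = (P1,Q1,R1,S1)" by (cases "F xs" rule: prod_cases4)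
  have "F (rev xs) = (P1,R1,Q1,S1)" using Cons.IH A by simp
  moreover have e: "P = x*P1-Q1" "Q = P1" "R = x*R1-S1" "S = R1" using Cons.prems A by auto
  ultimately show ?case by (simp add: F_append algebra_simps)
qed

lemma F_inv: "\<forall>x\<in>set xs. x \<ge> 2 \<Longrightarrow> F xs = (P,Q,R,S) \<Longrightarrow>
   0 \<le> Q \<and> Q+1 \<le> P \<and> 0 \<le> R \<and> S+1 \<le> R \<and> R+1 \<le> P \<and> Q - S \<le> P - R \<and> R*Q - P*S = 1 \<and> 1 \<le> Q - S"
proof (induction xs arbitrary: P Q R S)
  case Nil then show ?case by simp
next
  case (Cons x xs)
  obtain P1 Q1 R1 S1 where A: "F xs = (P1,Q1,R1,S1)" by (cases "F xs" rule: prod_cases4)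
  have I: "0 \<le> Q1 \<and> Q1+1 \<le> P1 \<and> 0 \<le> R1 \<and> S1+1 \<le> R1 \<and> R1+1 \<le> P1 \<and> Q1 - S1 \<le> P1 - R1 \<and> R1*Q1 - P1*S1 = 1 \<and> 1 \<le> Q1 - S1"
    using Cons A by simp
  have x: "x \<ge> 2" using Cons.prems by simp
  have e: "P = x*P1-Q1" "Q = P1" "R = x*R1-S1" "S = R1" using Cons.prems A by auto
  have m1: "(x-2)*P1 \<ge> 0" "(x-2)*R1 \<ge> 0" "(x-2)*(P1-R1) \<ge> 0" using I x by auto
  show ?case unfolding e using I m1 by (auto simp: algebra_simps)
qed

lemma F_hj: "xs \<noteq> [] \<Longrightarrow> \<forall>x\<in>set xs. x \<ge> 2 \<Longrightarrow> F xs = (P,Q,R,S) \<Longrightarrow>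
   hjcf (map of_int xs) = of_int P / of_int Q"
proof (induction xs arbitrary: P Q R S)
  case Nil then show ?case by simp
next
  case (Cons x xs)
  show ?case
  proof (cases "xs = []")
    case True then show ?thesis using Cons.prems by auto
  next
    case False
    then obtain y ys where xs: "xs = y # ys" by (cases xs) auto
    obtain P1 Q1 R1 S1 where A: "F xs = (P1,Q1,R1,S1)" by (cases "F xs" rule: prod_cases4)
    have I: "Q1+1 \<le> P1" "0 \<le> Q1" using F_inv[of xs] Cons.prems A by auto
    have h: "hjcf (map of_int xs) = of_int P1 / of_int Q1" using Cons False A by simp
    have e: "P = x*P1-Q1" "Q = P1" using Cons.prems A by auto
    have "hjcf (map of_int (x#xs)) = of_int x - 1 / hjcf (map of_int xs)" using xs by simp
    also have "\<dots> = of_int x - of_int Q1 / of_int P1" using h by simp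
    also have "\<dots> = of_int P / of_int Q" unfolding e using I by (simp add: field_simps)
    finally show ?thesis .
  qed
qed

lemma poly: fixes A B C :: "int\<times>int\<times>int\<times>int" shows
 "mcomp A (mcomp (K+1,K,K,K-1) (mcomp C (mcomp (m+K,1,1,0) B))) =
  add4 (add4 (smul (K^2) (mcomp A (mcomp (1,1,1,1) (mcomp C (mcomp (1,0,0,0) B)))))
     (smul K (mcomp A (add4 (mcomp C (mcomp (1,0,0,0) B)) (mcomp (1,1,1,1) (mcomp C (mcomp (m,1,1,0) B)))))))
   (mcomp A (mcomp C (mcomp (m,1,1,0) B)))"
  apply (cases A rule: prod_cases4; cases B rule: prod_cases4; cases C rule: prod_cases4)
  apply (simp add: algebra_simps power2_eq_square)
  done

lemma uniq_frac: fixes p q P Q :: int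
  assumes "coprime p q" "coprime P Q" "p*Q = P*q" "p > 0" "P > 0" "q > 0"
  shows "p = P \<and> q = Q"
proof -
  have "p dvd P*q" using assms(3) by (metis dvd_triv_left)
  hence "p dvd P" using assms(1) by (simp add: coprime_dvd_mult_left_iff)
  moreover have "P dvd p*Q" using assms(3) by (metis dvd_triv_left)
  hence "P dvd p" using assms(2) by (simp add: coprime_dvd_mult_left_iff)
  ultimately have "p = P" using assms by (simp add: zdvd_antisym_nonneg)
  then show ?thesis using assms(3,5) by simp
qed

theorem lemma3p4:
  fixes a c b :: "int list" and m :: int
  assumes "\<forall>x\<in>set a. x \<ge> 2" and "\<forall>x\<in>set c. x \<ge> 2" and "\<forall>x\<in>set b. x \<ge> 2"
    and "m \<ge> 2"
    and "a \<noteq> [] \<longrightarrow> last a > 2"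
  shows "\<exists>d1 e1 f1 d2 e2 f2 d3 e3 f3 :: rat.
    d1 \<noteq> 0 \<and>
    (\<forall>(k::nat) (p::int) (q::int) (qi::int).
       (p > q \<and> q > 0 \<and> coprime p q \<and>
        of_int p / of_int q =
          hjcf (map of_int a @ replicate k 2 @ map of_int c @ [of_int m + of_nat k] @ map of_int b) \<and>
        0 < qi \<and> qi < p \<and> [q * qi = 1] (mod p))
       \<longrightarrow> of_int p = d1 * of_nat k ^ 2 + e1 * of_nat k + f1
         \<and> of_int q = d2 * of_nat k ^ 2 + e2 * of_nat k + f2
         \<and> of_int qi = d3 * of_nat k ^ 2 + e3 * of_nat k + f3) \<and>
    d1 / d2 = (if a \<noteq> [] then hjcf (map of_int (butlast a) @ [of_int (last a) - 1]) else 1) \<and>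
    (if b \<noteq> [] then d1 / d3 = hjcf (map of_int (rev b)) else d3 = 0)"
proof -
  define L where "L k = a @ replicate k 2 @ c @ [m + int k] @ b" for k
  obtain a1 a2 a3 a4 where FA: "F a = (a1,a2,a3,a4)" by (cases "F a" rule: prod_cases4)
  obtain b1 b2 b3 b4 where FB: "F b = (b1,b2,b3,b4)" by (cases "F b" rule: prod_cases4)
  obtain c1 c2 c3 c4 where FC: "F c = (c1,c2,c3,c4)" by (cases "F c" rule: prod_cases4)
  define U0 where "U0 = mcomp (F c) (mcomp (m,1,1,0) (F b))"
  define U1 where "U1 = mcomp (F c) (mcomp (1,0,0,0) (F b))"
  define Dq where "Dq = mcomp (F a) (mcomp (1,1,1,1) U1)"
  define Eq where "Eq = mcomp (F a) (add4 U1 (mcomp (1,1,1,1) U0))"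
  define Fq where "Fq = mcomp (F a) U0"
  have FL: "F (L k) = add4 (add4 (smul (int k^2) Dq) (smul (int k) Eq)) Fq" for k
  proof -
    have "F (L k) = mcomp (F a) (mcomp (int k+1, int k, int k, int k - 1) (mcomp (F c) (mcomp (m+int k,1,1,0) (F b))))"
      unfolding L_def by (simp add: F_append F_rep FB)
    also have "\<dots> = add4 (add4 (smul (int k^2) Dq) (smul (int k) Eq)) Fq"
      unfolding poly Dq_def Eq_def Fq_def U0_def U1_def by simp
    finally show ?thesis .
  qed
  have Dq: "Dq = ((a1-a3)*(c1-c2)*b1, (a2-a4)*(c1-c2)*b1, (a1-a3)*(c1-c2)*b3, (a2-a4)*(c1-c2)*b3)"
    unfolding Dq_def U1_def FA FB FC by (simp add: algebra_simps)
  obtain E1 E2 E3 E4 where EQ: "Eq = (E1,E2,E3,E4)" by (cases Eq rule: prod_cases4)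
  obtain F1 F2 F3 F4 where FQ: "Fq = (F1,F2,F3,F4)" by (cases Fq rule: prod_cases4)
  have ia: "a1 - a3 \<ge> 1" "a2 - a4 \<ge> 1" using F_inv[OF assms(1) FA] by auto
  have ic: "c1 - c2 \<ge> 1" using F_inv[OF assms(2) FC] by auto
  have ib: "b1 \<ge> 1" "b3 \<ge> 0" using F_inv[OF assms(3) FB] by auto
  define D1 where "D1 = (a1-a3)*(c1-c2)*b1"
  define D2 where "D2 = (a2-a4)*(c1-c2)*b1"
  define D3 where "D3 = (a1-a3)*(c1-c2)*b3"
  have D1pos: "D1 > 0" unfolding D1_def using ia ic ib by simp
  have main: "\<forall>(k::nat) (p::int) (q::int) (qi::int).
       (p > q \<and> q > 0 \<and> coprime p q \<and>
        of_int p / of_int q =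
          hjcf (map of_int a @ replicate k 2 @ map of_int c @ [of_int m + of_nat k] @ map of_int b) \<and>
        0 < qi \<and> qi < p \<and> [q * qi = 1] (mod p))
       \<longrightarrow> (of_int p::rat) = of_int D1 * of_nat k ^ 2 + of_int E1 * of_nat k + of_int F1
         \<and> (of_int q::rat) = of_int D2 * of_nat k ^ 2 + of_int E2 * of_nat k + of_int F2
         \<and> (of_int qi::rat) = of_int D3 * of_nat k ^ 2 + of_int E3 * of_nat k + of_int F3"
  proof (intro allI impI)
    fix k :: nat and p q qi :: int
    assume H: "p > q \<and> q > 0 \<and> coprime p q \<and>
        of_int p / of_int q =
          hjcf (map of_int a @ replicate k 2 @ map of_int c @ [of_int m + of_nat k] @ map of_int b) \<and>
        0 < qi \<and> qi < p \<and> [q * qi = 1] (mod p)"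
    obtain P Q R S where FLk: "F (L k) = (P,Q,R,S)" by (cases "F (L k)" rule: prod_cases4)
    have lst: "map of_int a @ replicate k 2 @ map of_int c @ [of_int m + of_nat k] @ map of_int b
       = map (of_int :: int \<Rightarrow> rat) (L k)" unfolding L_def by simp
    have ge2: "\<forall>x\<in>set (L k). x \<ge> 2" unfolding L_def using assms by auto
    have ne: "L k \<noteq> []" unfolding L_def by simp
    have I: "0 \<le> Q \<and> Q+1 \<le> P \<and> 0 \<le> R \<and> S+1 \<le> R \<and> R+1 \<le> P \<and> Q - S \<le> P - R \<and> R*Q - P*S = 1"
      using F_inv[OF ge2 FLk] by simp
    have hj: "hjcf (map of_int (L k)) = (of_int P / of_int Q :: rat)" using F_hj[OF ne ge2 FLk] .
    have Qpos: "Q > 0" using I hj H lst by (metis not_less zero_less_iff_neq_zero order.refl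
          le_less division_ring_divide_zero of_int_0 divide_eq_0_iff of_int_eq_0_iff)
    have cop: "coprime P Q"
    proof (rule coprimeI)
      fix d assume "d dvd P" "d dvd Q"
      hence "d dvd R*Q - P*S" by simp
      thus "is_unit d" using I by simp
    qed
    have eqr: "(of_int p / of_int q :: rat) = of_int P / of_int Q" using H lst hj by simp
    have qnz: "q \<noteq> 0" using H by simp
    have "(of_int (p*Q) :: rat) = of_int (P*q)" using eqr qnz Qpos by (simp add: frac_eq_eq)
    hence "p*Q = P*q" by (simp only: of_int_eq_iff)
    hence pq: "p = P \<and> q = Q" using uniq_frac[of p q P Q] H cop I by auto
    have c1: "[Q * R = 1] (mod P)" using I unfolding cong_iff_dvd_diff
      by (metis (no_types, lifting) add_diff_cancel_left' diff_add_cancel dvd_triv_left mult.commute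
          dvd_minus_iff minus_diff_eq)
    have c2: "[Q * qi = 1] (mod P)" using H pq by simp
    have "[qi = qi * (Q*R)] (mod P)" using c1 by (metis cong_scalar_left cong_sym mult.right_neutral)
    moreover have "[qi * (Q*R) = R] (mod P)" using c2
      by (metis cong_scalar_right mult.assoc mult.commute mult.left_neutral)
    ultimately have "[qi = R] (mod P)" by (rule cong_trans)
    hence qiR: "qi = R" using H pq I by (intro cong_less_imp_eq_int) auto
    have comps: "P = int k^2 * D1 + int k * E1 + F1" "Q = int k^2 * D2 + int k * E2 + F2"
        "R = int k^2 * D3 + int k * E3 + F3"
      using FL[of k] FLk Dq EQ FQ unfolding D1_def D2_def D3_def by auto
    show "(of_int p::rat) = of_int D1 * of_nat k ^ 2 + of_int E1 * of_nat k + of_int F1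
         \<and> (of_int q::rat) = of_int D2 * of_nat k ^ 2 + of_int E2 * of_nat k + of_int F2
         \<and> (of_int qi::rat) = of_int D3 * of_nat k ^ 2 + of_int E3 * of_nat k + of_int F3"
      using pq qiR comps by (simp add: algebra_simps)
  qed
  have r1: "(of_int D1::rat) / of_int D2 = (if a \<noteq> [] then hjcf (map of_int (butlast a) @ [of_int (last a) - 1]) else 1)"
  proof (cases "a = []")
    case True
    then have "D1 = D2" using FA unfolding D1_def D2_def by (auto simp: algebra_simps)
    then show ?thesis using True D1pos by simp
  next
    case False
    define a' where "a' = butlast a"
    define x where "x = last a"
    have adec: "a = a' @ [x]" using False unfolding a'_def x_def by simp
    obtain g1 g2 g3 g4 where G: "F a' = (g1,g2,g3,g4)" by (cases "F a'" rule: prod_cases4)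
    have "F a = mcomp (g1,g2,g3,g4) (x,1,1,0)" using adec G by (simp add: F_append)
    hence ae: "a1 = g1*x - g3" "a2 = g2*x - g4" "a3 = g1" "a4 = g2" using FA by auto
    have FM: "F (a' @ [x-1]) = (a1-a3, a2-a4, g1, g2)" using G ae by (simp add: F_append algebra_simps)
    have ge: "\<forall>y\<in>set (a' @ [x-1]). y \<ge> 2" using assms(1,5) False unfolding a'_def x_def
      by (auto dest: in_set_butlastD)
    have "hjcf (map of_int (a' @ [x-1])) = (of_int (a1-a3) / of_int (a2-a4) :: rat)"
      using F_hj[OF _ ge FM] by simp
    moreover have "map of_int (butlast a) @ [of_int (last a) - 1] = map (of_int::int\<Rightarrow>rat) (a' @ [x-1])"
      unfolding a'_def x_def by simp
    moreover have "(of_int D1::rat) / of_int D2 = of_int (a1-a3) / of_int (a2-a4)"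
    proof -
      have s: "rat_of_int ((c1-c2)*b1) \<noteq> 0" using ic ib by simp
      have e1: "(of_int D1::rat) = of_int (a1-a3) * rat_of_int ((c1-c2)*b1)"
        unfolding D1_def by (simp only: of_int_mult mult.assoc)
      have e2: "(of_int D2::rat) = of_int (a2-a4) * rat_of_int ((c1-c2)*b1)"
        unfolding D2_def by (simp only: of_int_mult mult.assoc)
      show ?thesis unfolding e1 e2 using s by simp
    qed
    ultimately show ?thesis using False by simp
  qed
  have r2: "(if b \<noteq> [] then (of_int D1::rat) / of_int D3 = hjcf (map of_int (rev b)) else (of_int D3::rat) = 0)"
  proof (cases "b = []")
    case True
    then have "b3 = 0" using FB by auto
    then show ?thesis using True unfolding D3_def by simp
  next
    case False
    have FR: "F (rev b) = (b1,b3,b2,b4)" using F_rev[OF FB] .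
    have "hjcf (map of_int (rev b)) = (of_int b1 / of_int b3 :: rat)"
      using F_hj[OF _ _ FR] False assms(3) by simp
    moreover have "(of_int D1::rat) / of_int D3 = of_int b1 / of_int b3"
    proof -
      have s: "rat_of_int ((a1-a3)*(c1-c2)) \<noteq> 0" using ic ia by simp
      have e1: "(of_int D1::rat) = of_int b1 * rat_of_int ((a1-a3)*(c1-c2))"
        unfolding D1_def by (simp add: ac_simps)
      have e2: "(of_int D3::rat) = of_int b3 * rat_of_int ((a1-a3)*(c1-c2))"
        unfolding D3_def by (simp add: ac_simps)
      show ?thesis unfolding e1 e2 using s by simp
    qed
    ultimately show ?thesis using False by simp
  qed
  show ?thesis
    apply (rule exI[of _ "of_int D1"], rule exI[of _ "of_int E1"], rule exI[of _ "of_int F1"])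
    apply (rule exI[of _ "of_int D2"], rule exI[of _ "of_int E2"], rule exI[of _ "of_int F2"])
    apply (rule exI[of _ "of_int D3"], rule exI[of _ "of_int E3"], rule exI[of _ "of_int F3"])
    apply (intro conjI)
       apply (use D1pos in simp)
      apply (rule main)
     apply (rule r1)
    apply (rule r2)
    done
qed

end
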